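(* $NQC(HAM_n^{n/2})=O(\log n)$.
   Context: For even $n$ and $x,y\in\{0,1\}^n$, $HAM^t_n(x,y)=1$ iff $\sum_{i=1}^n(x_i\oplus y_i)\neq t$. Quantum communication model (Yao, no prior entanglement): Alice receives $x$, Bob $y$; each holds private qubits initialized to the input and $|0\rangle$; in each round one player applies a unitary to his qubits and sends one qubit; at the end a qubit is measured giving the output; the cost is the number of qubits exchanged. A nondeterministic quantum protocol for a Boolean $f$ rejects every input in $f^{-1}(0)$ with certainty and accepts every other input with positive probability; $NQC(f)$ is the minimum cost of such a protocol. *)

theory Defs
  imports Complex_Main
begin

text \<open>Qubit labels: Alice's private qubits, Bob's private qubits, and one
  message qubit per round (the qubit sent in round s is CQ s).\<close>
datatype qlab = AQ nat | BQ nat | CQ nat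

type_synonym basis = "qlab \<Rightarrow> bool"
type_synonym qop = "basis \<Rightarrow> basis \<Rightarrow> complex"
type_synonym qstate = "basis \<Rightarrow> complex"

definition basis_on :: "qlab set \<Rightarrow> basis set" where
  "basis_on S = {f. \<forall>q. q \<notin> S \<longrightarrow> \<not> f q}"

definition restr :: "basis \<Rightarrow> qlab set \<Rightarrow> basis" where
  "restr f S = (\<lambda>q. q \<in> S \<and> f q)"

definition unitary_on :: "qlab set \<Rightarrow> qop \<Rightarrow> bool" where
  "unitary_on S U \<longleftrightarrow>
     (\<forall>f\<in>basis_on S. \<forall>g\<in>basis_on S.
        (\<Sum>h\<in>basis_on S. cnj (U h f) * U h g) = (if f = g then 1 else 0))"

text \<open>Apply U (acting on register S) tensored with the identity on the rest.\<close>
definition apply_op :: "qlab set \<Rightarrow> qop \<Rightarrow> qstate \<Rightarrow> qstate" where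
  "apply_op S U \<psi> =
     (\<lambda>f. \<Sum>g\<in>basis_on S. U (restr f S) g * \<psi> (\<lambda>q. g q \<or> (q \<notin> S \<and> f q)))"

text \<open>turn s = True means Alice sends in round s. The unitaries may depend on
  the player's own input (equivalent to unitaries acting on an input register).
  Round index rounds is used for the final local unitary of the player who
  measures; that player measures qubit 0 of his private register.\<close>
record qproto =
  qa :: nat
  qb :: nat
  rounds :: nat
  turn :: "nat \<Rightarrow> bool"
  ua :: "bool list \<Rightarrow> nat \<Rightarrow> qop"
  ub :: "bool list \<Rightarrow> nat \<Rightarrow> qop"
  fin_alice :: bool

definition all_qubits :: "qproto \<Rightarrow> qlab set" where
  "all_qubits P = {AQ i |i. i < qa P} \<union> {BQ j |j. j < qb P} \<union> {CQ s |s. s < rounds P}"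

text \<open>Qubits held by Alice / Bob before round t is executed.\<close>
definition alice_holds :: "qproto \<Rightarrow> nat \<Rightarrow> qlab set" where
  "alice_holds P t = {AQ i |i. i < qa P} \<union>
     {CQ s |s. s < rounds P \<and> ((s < t \<and> \<not> turn P s) \<or> (t \<le> s \<and> turn P s))}"

definition bob_holds :: "qproto \<Rightarrow> nat \<Rightarrow> qlab set" where
  "bob_holds P t = {BQ j |j. j < qb P} \<union>
     {CQ s |s. s < rounds P \<and> ((s < t \<and> turn P s) \<or> (t \<le> s \<and> \<not> turn P s))}"

definition init_state :: qstate where
  "init_state = (\<lambda>f. if (\<forall>q. \<not> f q) then 1 else 0)"

definition step :: "qproto \<Rightarrow> bool list \<Rightarrow> bool list \<Rightarrow> nat \<Rightarrow> qstate \<Rightarrow> qstate" where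
  "step P x y t \<psi> =
     (if turn P t then apply_op (alice_holds P t) (ua P x t) \<psi>
      else apply_op (bob_holds P t) (ub P y t) \<psi>)"

fun run_upto :: "qproto \<Rightarrow> bool list \<Rightarrow> bool list \<Rightarrow> nat \<Rightarrow> qstate" where
  "run_upto P x y 0 = init_state"
| "run_upto P x y (Suc t) = step P x y t (run_upto P x y t)"

definition final_state :: "qproto \<Rightarrow> bool list \<Rightarrow> bool list \<Rightarrow> qstate" where
  "final_state P x y =
     (if fin_alice P
      then apply_op (alice_holds P (rounds P)) (ua P x (rounds P)) (run_upto P x y (rounds P))
      else apply_op (bob_holds P (rounds P)) (ub P y (rounds P)) (run_upto P x y (rounds P)))"

definition out_qubit :: "qproto \<Rightarrow> qlab" where
  "out_qubit P = (if fin_alice P then AQ 0 else BQ 0)"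

definition accept_prob :: "qproto \<Rightarrow> bool list \<Rightarrow> bool list \<Rightarrow> real" where
  "accept_prob P x y =
     (\<Sum>f\<in>basis_on (all_qubits P). if f (out_qubit P) then (cmod (final_state P x y f))^2 else 0)"

definition valid_proto :: "nat \<Rightarrow> qproto \<Rightarrow> bool" where
  "valid_proto n P \<longleftrightarrow> qa P \<ge> 1 \<and> qb P \<ge> 1 \<and>
     (\<forall>x t. length x = n \<and> t \<le> rounds P \<longrightarrow> unitary_on (alice_holds P t) (ua P x t)) \<and>
     (\<forall>y t. length y = n \<and> t \<le> rounds P \<longrightarrow> unitary_on (bob_holds P t) (ub P y t))"

definition nq_computes :: "nat \<Rightarrow> (bool list \<Rightarrow> bool list \<Rightarrow> bool) \<Rightarrow> qproto \<Rightarrow> bool" where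
  "nq_computes n F P \<longleftrightarrow> valid_proto n P \<and>
     (\<forall>x y. length x = n \<and> length y = n \<longrightarrow>
        (\<not> F x y \<longrightarrow> accept_prob P x y = 0) \<and> (F x y \<longrightarrow> accept_prob P x y > 0))"

definition NQC :: "nat \<Rightarrow> (bool list \<Rightarrow> bool list \<Rightarrow> bool) \<Rightarrow> nat" where
  "NQC n F = (LEAST k. \<exists>P. nq_computes n F P \<and> rounds P = k)"

definition HAM :: "nat \<Rightarrow> nat \<Rightarrow> bool list \<Rightarrow> bool list \<Rightarrow> bool" where
  "HAM n t x y \<longleftrightarrow> card {i. i < n \<and> x ! i \<noteq> y ! i} \<noteq> t"

end

theory Submission
  imports Defs "HOL-Library.Log_Nat"
begin

lemma finite_basis_on: "finite S \<Longrightarrow> finite (basis_on S)"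
proof -
  assume fS: "finite S"
  have "basis_on S \<subseteq> (\<lambda>T q. q \<in> T) ` Pow S"
  proof
    fix f assume "f \<in> basis_on S"
    then have "{q. f q} \<subseteq> S" "f = (\<lambda>q. q \<in> {q. f q})" by (auto simp: basis_on_def)
    then show "f \<in> (\<lambda>T q. q \<in> T) ` Pow S" by blast
  qed
  then show ?thesis using fS by (meson finite_Pow_iff finite_imageI finite_subset)
qed

definition nrm :: "qlab set \<Rightarrow> qstate \<Rightarrow> real" where
  "nrm S p = (\<Sum>h\<in>basis_on S. (cmod (p h))^2)"

definition hh :: "qlab set \<Rightarrow> qstate \<Rightarrow> qop" where
  "hh S p = (\<lambda>f g. (if f = g then 1 else 0) - 2 * p f * cnj (p g) / complex_of_real (nrm S p))"

lemma nrm_cplx: "complex_of_real (nrm S p) = (\<Sum>h\<in>basis_on S. cnj (p h) * p h)"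
  unfolding nrm_def of_real_sum by (simp only: complex_norm_square mult.commute)

lemma sum_delta1: "finite A \<Longrightarrow> a \<in> A \<Longrightarrow> (\<Sum>g\<in>A. (if a = g then 1 else 0) * (h g :: complex)) = h a"
proof -
  assume "finite A" "a \<in> A"
  have "(\<Sum>g\<in>A. (if a = g then 1 else 0) * h g) = (\<Sum>g\<in>A. if a = g then h g else 0)"
    by (rule sum.cong) auto
  then show ?thesis using \<open>finite A\<close> \<open>a \<in> A\<close> by simp
qed

lemma hh_unitary:
  assumes "finite S" shows "unitary_on S (hh S p)"
  unfolding unitary_on_def
proof (intro ballI)
  fix f g assume f: "f \<in> basis_on S" and g: "g \<in> basis_on S"
  let ?N = "complex_of_real (nrm S p)"
  have fin: "finite (basis_on S)" using assms finite_basis_on by blast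
  show "(\<Sum>h\<in>basis_on S. cnj (hh S p h f) * hh S p h g) = (if f = g then 1 else 0)"
  proof (cases "?N = 0")
    case True
    then have "hh S p = (\<lambda>f g. if f = g then 1 else 0)" by (simp add: hh_def fun_eq_iff)
    then have "(\<Sum>h\<in>basis_on S. cnj (hh S p h f) * hh S p h g) =
      (\<Sum>h\<in>basis_on S. (if f = h then 1 else 0) * (if h = g then 1 else 0))"
      by (intro sum.cong) auto
    also have "\<dots> = (if f = g then 1 else 0)" using sum_delta1[OF fin f, of "\<lambda>h. if h = g then 1 else 0"] .
    finally show ?thesis .
  next
    case False
    let ?d = "\<lambda>a b. (if a = b then 1 else 0) :: complex"
    have e: "cnj (hh S p h f) * hh S p h g =
       ?d f h * ?d h g - ?d f h * (2 * p h * cnj (p g) / ?N) - ?d g h * (2 * cnj (p h) * p f / ?N)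
       + 4 * p f * cnj (p g) / (?N * ?N) * (cnj (p h) * p h)" for h
      using False by (simp add: hh_def field_simps)
    have s1: "(\<Sum>h\<in>basis_on S. ?d f h * ?d h g) = ?d f g" by (rule sum_delta1[OF fin f])
    have s2: "(\<Sum>h\<in>basis_on S. ?d f h * (2 * p h * cnj (p g) / ?N)) = 2 * p f * cnj (p g) / ?N"
      by (rule sum_delta1[OF fin f])
    have s3: "(\<Sum>h\<in>basis_on S. ?d g h * (2 * cnj (p h) * p f / ?N)) = 2 * cnj (p g) * p f / ?N"
      by (rule sum_delta1[OF fin g])
    have s4: "(\<Sum>h\<in>basis_on S. 4 * p f * cnj (p g) / (?N * ?N) * (cnj (p h) * p h)) = 4 * p f * cnj (p g) / (?N * ?N) * ?N"
      unfolding sum_distrib_left[symmetric] nrm_cplx ..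
    have "(\<Sum>h\<in>basis_on S. cnj (hh S p h f) * hh S p h g) =
       ?d f g - (2 * p f * cnj (p g) / ?N) - (2 * cnj (p g) * p f / ?N)
       + 4 * p f * cnj (p g) / (?N * ?N) * ?N"
      unfolding e sum.distrib sum_subtractf s1 s2 s3 s4 ..
    also have "\<dots> = ?d f g" using False by (simp add: field_simps)
    finally show ?thesis .
  qed
qed

lemma restr_in: "restr f S \<in> basis_on S" by (simp add: restr_def basis_on_def)

lemma apply_op_gen:
  assumes "finite S"
  shows "apply_op S (\<lambda>a b. (if a = b then 1 else 0) - c a b) \<psi> f =
    \<psi> f - (\<Sum>g\<in>basis_on S. c (restr f S) g * \<psi> (\<lambda>q. g q \<or> (q \<notin> S \<and> f q)))"
proof -
  have fin: "finite (basis_on S)" using assms finite_basis_on by blast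
  have m: "(\<lambda>q. restr f S q \<or> (q \<notin> S \<and> f q)) = f" by (auto simp: restr_def)
  show ?thesis unfolding apply_op_def using fin restr_in[of f S]
    by (simp add: left_diff_distrib sum_subtractf sum_delta1 m)
qed

lemma apply_hh:
  assumes "finite S"
  shows "apply_op S (hh S p) \<psi> f = \<psi> f - 2 * p (restr f S) / complex_of_real (nrm S p) *
    (\<Sum>g\<in>basis_on S. cnj (p g) * \<psi> (\<lambda>q. g q \<or> (q \<notin> S \<and> f q)))"
proof -
  have "apply_op S (hh S p) \<psi> f = \<psi> f - (\<Sum>g\<in>basis_on S. (2 * p (restr f S) * cnj (p g) / complex_of_real (nrm S p)) * \<psi> (\<lambda>q. g q \<or> (q \<notin> S \<and> f q)))"
    unfolding hh_def by (rule apply_op_gen[OF assms])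
  also have "\<dots> = \<psi> f - 2 * p (restr f S) / complex_of_real (nrm S p) *
    (\<Sum>g\<in>basis_on S. cnj (p g) * \<psi> (\<lambda>q. g q \<or> (q \<notin> S \<and> f q)))"
    by (simp add: sum_distrib_left mult_ac)
  finally show ?thesis .
qed

lemma apply_hh0: "finite S \<Longrightarrow> apply_op S (hh S (\<lambda>_. 0)) \<psi> = \<psi>"
proof
  fix f assume fS: "finite S"
  have "hh S (\<lambda>_. 0) = (\<lambda>a b. (if a = b then 1 else 0) - (\<lambda>a b. 0) a b)"
    by (simp add: hh_def fun_eq_iff)
  then show "apply_op S (hh S (\<lambda>_. 0)) \<psi> f = \<psi> f"
    using apply_op_gen[OF fS, of "\<lambda>a b. 0" \<psi> f] by simp
qed


definition zb :: basis where "zb = (\<lambda>_. False)"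

definition enc :: "nat \<Rightarrow> nat \<Rightarrow> basis" where
  "enc m i = (\<lambda>q. case q of CQ k \<Rightarrow> k < m \<and> odd (i div 2^k) | _ \<Rightarrow> False)"

definition enc1 :: "nat \<Rightarrow> nat \<Rightarrow> basis" where
  "enc1 m i = (enc m i)(BQ 0 := True)"

definition sg :: "bool \<Rightarrow> complex" where "sg b = (if b then -1 else 1)"

definition phi :: "nat \<Rightarrow> nat \<Rightarrow> bool list \<Rightarrow> qstate" where
  "phi m n x g = (\<Sum>i\<in>{1..n}. if g = enc m i then sg (x!(i-1)) else 0)"

definition phi1 :: "nat \<Rightarrow> nat \<Rightarrow> bool list \<Rightarrow> qstate" where
  "phi1 m n x g = (\<Sum>i\<in>{1..n}. if g = enc1 m i then sg (x!(i-1)) else 0)"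

definition pA :: "nat \<Rightarrow> nat \<Rightarrow> bool list \<Rightarrow> qstate" where
  "pA m n x = (\<lambda>g. (if g = zb then 1 else 0) - phi m n x g)"

definition pB :: "nat \<Rightarrow> nat \<Rightarrow> bool list \<Rightarrow> qstate" where
  "pB m n y = (\<lambda>g. phi m n y g - phi1 m n y g)"

definition Aset :: "nat \<Rightarrow> nat \<Rightarrow> qlab set" where
  "Aset m t = {AQ 0} \<union> {CQ s |s. s < m \<and> t \<le> s}"

definition Bset :: "nat \<Rightarrow> nat \<Rightarrow> qlab set" where
  "Bset m t = {BQ 0} \<union> {CQ s |s. s < m \<and> s < t}"

definition proto :: "nat \<Rightarrow> nat \<Rightarrow> qproto" where
  "proto m n = \<lparr>qa = 1, qb = 1, rounds = m, turn = (\<lambda>_. True),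
     ua = (\<lambda>x t. hh (Aset m t) (if t = 0 then pA m n x else (\<lambda>_. 0))),
     ub = (\<lambda>y t. hh (Bset m t) (pB m n y)), fin_alice = False\<rparr>"

lemma proto_simps [simp]: "qa (proto m n) = 1" "qb (proto m n) = 1" "rounds (proto m n) = m"
  "turn (proto m n) t = True" "ua (proto m n) x t = hh (Aset m t) (if t = 0 then pA m n x else (\<lambda>_. 0))"
  "ub (proto m n) y t = hh (Bset m t) (pB m n y)" "fin_alice (proto m n) = False"
  by (simp_all add: proto_def)

lemma alice_holds_proto: "alice_holds (proto m n) t = Aset m t"
  by (auto simp: alice_holds_def proto_def Aset_def)

lemma bob_holds_proto: "bob_holds (proto m n) t = Bset m t"
  by (auto simp: bob_holds_def proto_def Bset_def)

lemma all_qubits_proto: "all_qubits (proto m n) = {AQ 0, BQ 0} \<union> {CQ s |s. s < m}"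
  by (auto simp: all_qubits_def proto_def)

lemma finite_Aset: "finite (Aset m t)"
proof -
  have "{CQ s |s. s < m \<and> t \<le> s} \<subseteq> CQ ` {..<m}" by auto
  then have "finite {CQ s |s. s < m \<and> t \<le> s}" by (rule finite_subset) simp
  then show ?thesis unfolding Aset_def by simp
qed

lemma finite_Bset: "finite (Bset m t)"
proof -
  have "{CQ s |s. s < m \<and> s < t} \<subseteq> CQ ` {..<m}" by auto
  then have "finite {CQ s |s. s < m \<and> s < t}" by (rule finite_subset) simp
  then show ?thesis unfolding Bset_def by simp
qed

lemma finite_all: "finite ({AQ 0, BQ 0} \<union> {CQ s |s. s < m})"
proof -
  have "{CQ s |s. s < m} = CQ ` {..<m}" by auto
  then show ?thesis by simp
qed

lemma enc_inj:
  assumes "i < 2^m" "j < 2^m" "enc m i = enc m j" shows "i = j"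
proof -
  have "odd (i div 2^k) = odd (j div 2^k)" for k
  proof (cases "k < m")
    case True
    then show ?thesis using fun_cong[OF assms(3), of "CQ k"] by (simp add: enc_def)
  next
    case False
    then have "2^m \<le> (2::nat)^k" by simp
    then have "i < 2^k" "j < 2^k" using assms(1,2) by linarith+
    then have "i div 2^k = 0" "j div 2^k = 0" by simp_all
    then show ?thesis by simp
  qed
  then show ?thesis by (simp add: bit_eq_iff bit_iff_odd)
qed

lemma enc0: "enc m 0 = zb" by (auto simp: enc_def zb_def fun_eq_iff split: qlab.splits)

lemma enc_nz: "1 \<le> i \<Longrightarrow> i < 2^m \<Longrightarrow> enc m i \<noteq> zb"
  using enc_inj[of i m 0] enc0 by force

lemma enc_BQ [simp]: "enc m i (BQ j) = False" "enc m i (AQ j) = False"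
  by (simp_all add: enc_def)

lemma enc1_BQ0 [simp]: "enc1 m i (BQ 0) = True" by (simp add: enc1_def)

lemma enc_ne_enc1 [simp]: "enc m i \<noteq> enc1 m j"
  by (metis enc1_BQ0 enc_BQ(1))

lemma enc1_inj:
  assumes "i < 2^m" "j < 2^m" "enc1 m i = enc1 m j" shows "i = j"
proof -
  have "enc m i = enc m j"
  proof
    fix q show "enc m i q = enc m j q"
      using fun_cong[OF assms(3), of q] by (cases "q = BQ 0") (auto simp: enc1_def)
  qed
  then show ?thesis using enc_inj assms by blast
qed

lemma enc_in_A: "enc m i \<in> basis_on (Aset m 0)"
  by (auto simp: basis_on_def Aset_def enc_def split: qlab.splits)
lemma enc_in_B: "enc m i \<in> basis_on (Bset m m)"
  by (auto simp: basis_on_def Bset_def enc_def split: qlab.splits)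
lemma enc1_in_B: "enc1 m i \<in> basis_on (Bset m m)"
  by (auto simp: basis_on_def Bset_def enc1_def enc_def split: qlab.splits)
lemma enc1_in_all: "enc1 m i \<in> basis_on ({AQ 0, BQ 0} \<union> {CQ s |s. s < m})"
  by (auto simp: basis_on_def enc1_def enc_def split: qlab.splits)

lemma phi_enc:
  assumes "n < 2^m" "i \<in> {1..n}" shows "phi m n x (enc m i) = sg (x!(i-1))"
proof -
  have "phi m n x (enc m i) = (\<Sum>j\<in>{1..n}. if j = i then sg (x!(j-1)) else 0)"
    unfolding phi_def
  proof (rule sum.cong)
    fix j assume "j \<in> {1..n}"
    then have "(enc m i = enc m j) = (j = i)" using assms enc_inj[of i m j] by auto
    then show "(if enc m i = enc m j then sg (x ! (j - 1)) else 0) = (if j = i then sg (x ! (j - 1)) else 0)" by simp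
  qed simp
  then show ?thesis using assms by simp
qed

lemma phi1_enc1:
  assumes "n < 2^m" "i \<in> {1..n}" shows "phi1 m n x (enc1 m i) = sg (x!(i-1))"
proof -
  have "phi1 m n x (enc1 m i) = (\<Sum>j\<in>{1..n}. if j = i then sg (x!(j-1)) else 0)"
    unfolding phi1_def
  proof (rule sum.cong)
    fix j assume "j \<in> {1..n}"
    then have "(enc1 m i = enc1 m j) = (j = i)" using assms enc1_inj[of i m j] by auto
    then show "(if enc1 m i = enc1 m j then sg (x ! (j - 1)) else 0) = (if j = i then sg (x ! (j - 1)) else 0)" by simp
  qed simp
  then show ?thesis using assms by simp
qed

lemma phi_nz: "phi m n x g \<noteq> 0 \<Longrightarrow> \<exists>i\<in>{1..n}. g = enc m i"
proof (rule ccontr)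
  assume a: "phi m n x g \<noteq> 0" "\<not> (\<exists>i\<in>{1..n}. g = enc m i)"
  then have "phi m n x g = 0" unfolding phi_def by (intro sum.neutral) auto
  then show False using a by simp
qed

lemma phi1_nz: "phi1 m n x g \<noteq> 0 \<Longrightarrow> \<exists>i\<in>{1..n}. g = enc1 m i"
proof (rule ccontr)
  assume a: "phi1 m n x g \<noteq> 0" "\<not> (\<exists>i\<in>{1..n}. g = enc1 m i)"
  then have "phi1 m n x g = 0" unfolding phi1_def by (intro sum.neutral) auto
  then show False using a by simp
qed

lemma phi_zb: "n < 2^m \<Longrightarrow> phi m n x zb = 0"
proof (rule ccontr)
  assume a: "n < 2^m" "phi m n x zb \<noteq> 0"
  then obtain i where "i \<in> {1..n}" "zb = enc m i" using phi_nz by blast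
  then show False using enc_nz[of i m] a(1) by auto
qed

lemma phi1_zb: "phi1 m n x zb = 0"
proof (rule ccontr)
  assume a: "phi1 m n x zb \<noteq> 0"
  then obtain i where "zb = enc1 m i" using phi1_nz by blast
  then have "zb (BQ 0) = enc1 m i (BQ 0)" by simp
  then show False by (simp add: zb_def)
qed

lemma phi1_enc: "phi1 m n x (enc m i) = 0"
proof (rule ccontr)
  assume a: "phi1 m n x (enc m i) \<noteq> 0"
  then obtain j where "enc m i = enc1 m j" using phi1_nz by blast
  then show False by simp
qed

lemma phi_enc1: "phi m n x (enc1 m i) = 0"
proof (rule ccontr)
  assume a: "phi m n x (enc1 m i) \<noteq> 0"
  then obtain j where "enc1 m i = enc m j" using phi_nz by blast
  then show False using enc_ne_enc1[of m j i] by simp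
qed


lemma init_zb: "init_state f = (if f = zb then 1 else 0)"
  by (auto simp: init_state_def zb_def fun_eq_iff)

lemma zb_in: "zb \<in> basis_on S" by (simp add: basis_on_def zb_def)

lemma pA_zb: "n < 2^m \<Longrightarrow> pA m n x zb = 1"
  by (simp add: pA_def phi_zb)

lemma nrm_ge: "finite S \<Longrightarrow> f \<in> basis_on S \<Longrightarrow> (cmod (p f))^2 \<le> nrm S p"
  unfolding nrm_def by (rule member_le_sum) (auto simp: finite_basis_on)

lemma nrmA: "n < 2^m \<Longrightarrow> nrm (Aset m 0) (pA m n x) \<ge> 1"
  using nrm_ge[of "Aset m 0" zb "pA m n x"] finite_Aset zb_in pA_zb by simp

lemma psi1:
  assumes "n < 2^m"
  shows "apply_op (Aset m 0) (hh (Aset m 0) (pA m n x)) init_state f =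
    (1 - 2 / complex_of_real (nrm (Aset m 0) (pA m n x))) * (if f = zb then 1 else 0)
    + 2 / complex_of_real (nrm (Aset m 0) (pA m n x)) * phi m n x f"
proof -
  let ?A = "Aset m 0"
  let ?k = "2 / complex_of_real (nrm (Aset m 0) (pA m n x))"
  let ?Q = "\<forall>q. q \<notin> ?A \<longrightarrow> \<not> f q"
  have fin: "finite (basis_on ?A)" by (simp add: finite_Aset finite_basis_on)
  have "(\<Sum>g\<in>basis_on ?A. cnj (pA m n x g) * init_state (\<lambda>q. g q \<or> (q \<notin> ?A \<and> f q)))
      = (\<Sum>g\<in>basis_on ?A. (if zb = g then 1 else 0) * (cnj (pA m n x g) * (if ?Q then 1 else 0)))"
  proof (rule sum.cong)
    fix g assume "g \<in> basis_on ?A"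
    have "(\<lambda>q. g q \<or> (q \<notin> ?A \<and> f q)) = zb \<longleftrightarrow> g = zb \<and> ?Q"
      by (auto simp: zb_def fun_eq_iff)
    then show "cnj (pA m n x g) * init_state (\<lambda>q. g q \<or> (q \<notin> ?A \<and> f q)) =
      (if zb = g then 1 else 0) * (cnj (pA m n x g) * (if ?Q then 1 else 0))"
      by (auto simp: init_zb)
  qed simp
  also have "\<dots> = (if ?Q then 1 else 0)"
    using sum_delta1[OF fin zb_in] pA_zb[OF assms] by simp
  finally have s: "(\<Sum>g\<in>basis_on ?A. cnj (pA m n x g) * init_state (\<lambda>q. g q \<or> (q \<notin> ?A \<and> f q)))
      = (if ?Q then 1 else 0)" .
  show ?thesis
  proof (cases ?Q)
    case True
    then have r: "restr f ?A = f" by (auto simp: restr_def fun_eq_iff)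
    show ?thesis unfolding apply_hh[OF finite_Aset] s r using True
      by (simp add: pA_def init_zb algebra_simps phi_zb[OF assms])
  next
    case False
    then have "f \<noteq> zb" by (auto simp: zb_def)
    moreover have "phi m n x f = 0"
    proof (rule ccontr)
      assume "phi m n x f \<noteq> 0"
      then obtain i where "f = enc m i" using phi_nz by blast
      then show False using False enc_in_A[of m i] by (auto simp: basis_on_def)
    qed
    moreover have "(if ?Q then 1 else 0) = (0::complex)" using False by simp
    ultimately show ?thesis unfolding apply_hh[OF finite_Aset] s
      by (simp add: init_zb)
  qed
qed


definition psi1 :: "nat \<Rightarrow> nat \<Rightarrow> bool list \<Rightarrow> qstate" where
  "psi1 m n x f = (1 - 2 / complex_of_real (nrm (Aset m 0) (pA m n x))) * (if f = zb then 1 else 0)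
    + 2 / complex_of_real (nrm (Aset m 0) (pA m n x)) * phi m n x f"

lemma run_upto_proto:
  assumes "n < 2^m" "1 \<le> t" "t \<le> m"
  shows "run_upto (proto m n) x y t = psi1 m n x"
  using assms(2,3)
proof (induction t)
  case 0 then show ?case by simp
next
  case (Suc t)
  show ?case
  proof (cases "t = 0")
    case True
    then show ?thesis
      by (simp add: step_def alice_holds_proto psi1_def psi1[OF assms(1)] fun_eq_iff)
  next
    case False
    then have "run_upto (proto m n) x y t = psi1 m n x" using Suc by simp
    then show ?thesis using False
      by (simp add: step_def alice_holds_proto apply_hh0 finite_Aset)
  qed
qed

lemma final_proto:
  assumes "n < 2^m" "1 \<le> m"
  shows "final_state (proto m n) x y = apply_op (Bset m m) (hh (Bset m m) (pB m n y)) (psi1 m n x)"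
  using run_upto_proto[OF assms(1) assms(2) order_refl, of x y]
  by (simp add: final_state_def bob_holds_proto)

lemma psi1_BQ0: "n < 2^m \<Longrightarrow> f (BQ 0) \<Longrightarrow> psi1 m n x f = 0"
proof -
  assume a: "n < 2^m" "f (BQ 0)"
  then have "f \<noteq> zb" by (auto simp: zb_def)
  moreover have "phi m n x f = 0"
  proof (rule ccontr)
    assume "phi m n x f \<noteq> 0"
    then obtain j where "f = enc m j" using phi_nz by blast
    then show False using a(2) by simp
  qed
  ultimately show ?thesis by (simp add: psi1_def)
qed

lemma psi1_AQ0: "n < 2^m \<Longrightarrow> f (AQ 0) \<Longrightarrow> psi1 m n x f = 0"
proof -
  assume a: "n < 2^m" "f (AQ 0)"
  then have "f \<noteq> zb" by (auto simp: zb_def)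
  moreover have "phi m n x f = 0"
  proof (rule ccontr)
    assume "phi m n x f \<noteq> 0"
    then obtain j where "f = enc m j" using phi_nz by blast
    then show False using a(2) by simp
  qed
  ultimately show ?thesis by (simp add: psi1_def)
qed

definition cc :: "nat \<Rightarrow> nat \<Rightarrow> bool list \<Rightarrow> bool list \<Rightarrow> complex" where
  "cc m n x y = (\<Sum>g\<in>basis_on (Bset m m). cnj (pB m n y g) * psi1 m n x g)"

lemma final_val:
  assumes "n < 2^m" "1 \<le> m" "f \<in> basis_on ({AQ 0, BQ 0} \<union> {CQ s |s. s < m})" "f (BQ 0)"
  shows "final_state (proto m n) x y f = - (2 * pB m n y (restr f (Bset m m)) / complex_of_real (nrm (Bset m m) (pB m n y))
     * (if f (AQ 0) then 0 else cc m n x y))"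
proof -
  let ?B = "Bset m m"
  have s: "(\<Sum>g\<in>basis_on ?B. cnj (pB m n y g) * psi1 m n x (\<lambda>q. g q \<or> (q \<notin> ?B \<and> f q)))
     = (if f (AQ 0) then 0 else cc m n x y)"
  proof (cases "f (AQ 0)")
    case True
    then show ?thesis using psi1_AQ0[OF assms(1)] by (simp add: Bset_def)
  next
    case False
    have "(\<lambda>q. g q \<or> (q \<notin> ?B \<and> f q)) = g" for g
    proof
      fix q
      show "(g q \<or> (q \<notin> ?B \<and> f q)) = g q"
      proof (cases q)
        case (AQ k) then show ?thesis using assms(3) False by (cases "k = 0") (auto simp: basis_on_def Bset_def)
      qed (use assms(3) False in \<open>auto simp: basis_on_def Bset_def\<close>)
    qed
    then show ?thesis using False by (simp add: cc_def)
  qed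
  show ?thesis unfolding final_proto[OF assms(1,2)] apply_hh[OF finite_Bset] s
    using psi1_BQ0[of n m f x] assms(1,4) by simp
qed




lemma cnj_sg [simp]: "cnj (sg b) = sg b" by (simp add: sg_def)

lemma pB_enc: "n < 2^m \<Longrightarrow> i \<in> {1..n} \<Longrightarrow> pB m n y (enc m i) = sg (y!(i-1))"
  by (simp add: pB_def phi_enc phi1_enc)

lemma pB_zb: "n < 2^m \<Longrightarrow> pB m n y zb = 0"
  by (simp add: pB_def phi_zb phi1_zb)

lemma cc_val:
  assumes "n < 2^m"
  shows "cc m n x y = 2 / complex_of_real (nrm (Aset m 0) (pA m n x)) *
     (\<Sum>i\<in>{1..n}. sg (x!(i-1)) * sg (y!(i-1)))"
proof -
  let ?B = "Bset m m"
  let ?k = "2 / complex_of_real (nrm (Aset m 0) (pA m n x))"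
  have fin: "finite (basis_on ?B)" by (simp add: finite_Bset finite_basis_on)
  have "cc m n x y = (\<Sum>g\<in>basis_on ?B. (1 - ?k) * ((if zb = g then 1 else 0) * cnj (pB m n y g)) + ?k * (cnj (pB m n y g) * phi m n x g))"
    unfolding cc_def psi1_def by (rule sum.cong) (auto simp: algebra_simps)
  also have "\<dots> = ?k * (\<Sum>g\<in>basis_on ?B. cnj (pB m n y g) * phi m n x g)"
    unfolding sum.distrib sum_distrib_left[symmetric]
    using sum_delta1[OF fin zb_in, of "\<lambda>g. cnj (pB m n y g)"] pB_zb[OF assms]
    by simp
  also have "(\<Sum>g\<in>basis_on ?B. cnj (pB m n y g) * phi m n x g)
     = (\<Sum>g\<in>basis_on ?B. \<Sum>i\<in>{1..n}. if g = enc m i then cnj (pB m n y g) * sg (x!(i-1)) else 0)"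
    unfolding phi_def sum_distrib_left by (rule sum.cong) (auto intro: sum.cong)
  also have "\<dots> = (\<Sum>i\<in>{1..n}. \<Sum>g\<in>basis_on ?B. if g = enc m i then cnj (pB m n y g) * sg (x!(i-1)) else 0)"
    by (rule sum.swap)
  also have "\<dots> = (\<Sum>i\<in>{1..n}. sg (x!(i-1)) * sg (y!(i-1)))"
  proof (rule sum.cong)
    fix i assume i: "i \<in> {1..n}"
    show "(\<Sum>g\<in>basis_on ?B. if g = enc m i then cnj (pB m n y g) * sg (x!(i-1)) else 0) = sg (x!(i-1)) * sg (y!(i-1))"
      using fin enc_in_B[of m i] pB_enc[OF assms i] by (simp add: sum.delta')
  qed simp
  finally show ?thesis .
qed


lemma sg_mult: "sg a * sg b = 1 - 2 * (if a \<noteq> b then 1 else 0)"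
  by (simp add: sg_def)

lemma sum_sg:
  "(\<Sum>i\<in>{1..n}. sg (x!(i-1)) * sg (y!(i-1))) = of_nat n - 2 * of_nat (card {i. i < n \<and> x!i \<noteq> y!i})"
proof -
  have "(\<Sum>i\<in>{1..n}. sg (x!(i-1)) * sg (y!(i-1))) = (\<Sum>i<n. sg (x!i) * sg (y!i))"
    using sum.atLeast1_atMost_eq[of "\<lambda>i. sg (x!(i-1)) * sg (y!(i-1))" n] by simp
  also have "\<dots> = (\<Sum>i<n. 1 - 2 * (if x!i \<noteq> y!i then 1 else 0))"
    by (simp add: sg_mult)
  also have "\<dots> = of_nat n - 2 * (\<Sum>i<n. if x!i \<noteq> y!i then 1 else 0)"
    by (simp add: sum_subtractf sum_distrib_left)
  also have "(\<Sum>i<n. if x!i \<noteq> y!i then 1 else 0) = (of_nat (card {i. i < n \<and> x!i \<noteq> y!i}) :: complex)"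
  proof -
    have "(\<Sum>i<n. if x!i \<noteq> y!i then 1 else 0) = (\<Sum>i\<in>{..<n} \<inter> {i. x!i \<noteq> y!i}. 1::complex)"
      by (simp add: sum.If_cases)
    also have "{..<n} \<inter> {i. x!i \<noteq> y!i} = {i. i < n \<and> x!i \<noteq> y!i}" by auto
    finally show ?thesis by simp
  qed
  finally show ?thesis .
qed

lemma restr_self: "f \<in> basis_on S \<Longrightarrow> restr f S = f"
  by (auto simp: restr_def basis_on_def fun_eq_iff)

lemma accept_char:
  assumes "n < 2^m" "1 \<le> m" "1 \<le> n"
  shows "(cc m n x y = 0 \<longrightarrow> accept_prob (proto m n) x y = 0) \<and>
         (cc m n x y \<noteq> 0 \<longrightarrow> accept_prob (proto m n) x y > 0)"
proof -
  let ?All = "{AQ 0, BQ 0} \<union> {CQ s |s. s < m}"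
  have out: "out_qubit (proto m n) = BQ 0" by (simp add: out_qubit_def)
  have acc: "accept_prob (proto m n) x y = (\<Sum>f\<in>basis_on ?All. if f (BQ 0) then (cmod (final_state (proto m n) x y f))^2 else 0)"
    unfolding accept_prob_def out all_qubits_proto ..
  have finA: "finite (basis_on ?All)" using finite_all finite_basis_on by blast
  show ?thesis
  proof (intro conjI impI)
    assume c0: "cc m n x y = 0"
    show "accept_prob (proto m n) x y = 0" unfolding acc
      by (rule sum.neutral) (use final_val[OF assms(1,2)] c0 in auto)
  next
    assume c0: "cc m n x y \<noteq> 0"
    let ?f = "enc1 m 1"
    have f_in: "?f \<in> basis_on ?All" by (rule enc1_in_all)
    have fB: "restr ?f (Bset m m) = ?f" by (rule restr_self[OF enc1_in_B])
    have fA: "?f (AQ 0) = False" by (simp add: enc1_def)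
    have one: "1 \<in> {1..n}" using assms(3) by simp
    have pf: "pB m n y ?f = - sg (y!0)"
      using phi1_enc1[OF assms(1) one] by (simp add: pB_def phi_enc1)
    have pf0: "pB m n y ?f \<noteq> 0" using pf by (simp add: sg_def)
    have "(cmod (pB m n y ?f))^2 \<le> nrm (Bset m m) (pB m n y)"
      by (rule nrm_ge[OF finite_Bset enc1_in_B])
    then have NB: "nrm (Bset m m) (pB m n y) \<noteq> 0" using pf0 by auto
    have fv: "final_state (proto m n) x y ?f \<noteq> 0"
      using final_val[OF assms(1,2) f_in] fB fA c0 pf0 NB by simp
    have "0 < (if ?f (BQ 0) then (cmod (final_state (proto m n) x y ?f))^2 else 0)"
      using fv by simp
    also have "\<dots> \<le> (\<Sum>f\<in>basis_on ?All. if f (BQ 0) then (cmod (final_state (proto m n) x y f))^2 else 0)"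
      by (rule member_le_sum[OF f_in _ finA]) simp
    finally show "accept_prob (proto m n) x y > 0" unfolding acc .
  qed
qed


lemma nq:
  assumes "even n" "2 \<le> n"
  shows "nq_computes n (HAM n (n div 2)) (proto (floorlog 2 n) n)"
proof -
  define m where "m = floorlog 2 n"
  have nm: "n < 2^m" using floorlog_bounds[of n 2] assms(2) by (simp add: m_def)
  have m1: "1 \<le> m" using floorlog_eq_zero_iff[of 2 n] assms(2) by (simp add: m_def)
  have n1: "1 \<le> n" using assms(2) by simp
  have valid: "valid_proto n (proto m n)"
    unfolding valid_proto_def
    by (simp add: alice_holds_proto bob_holds_proto hh_unitary finite_Aset finite_Bset)
  have key: "HAM n (n div 2) x y \<longleftrightarrow> cc m n x y \<noteq> 0" for x y
  proof -
    define c where "c = card {i. i < n \<and> x!i \<noteq> y!i}"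
    have NA: "nrm (Aset m 0) (pA m n x) \<ge> 1" by (rule nrmA[OF nm])
    have k0: "2 / complex_of_real (nrm (Aset m 0) (pA m n x)) \<noteq> 0" using NA by auto
    have "cc m n x y = 0 \<longleftrightarrow> (of_nat n :: complex) - 2 * of_nat c = 0"
      unfolding cc_val[OF nm] sum_sg c_def using k0 by simp
    also have "\<dots> \<longleftrightarrow> (of_nat n :: complex) = of_nat (2 * c)" by simp
    also have "\<dots> \<longleftrightarrow> n = 2 * c" by (simp only: of_nat_eq_iff)
    also have "\<dots> \<longleftrightarrow> c = n div 2" using assms(1) by auto
    finally show ?thesis unfolding HAM_def c_def by blast
  qed
  show ?thesis unfolding m_def[symmetric] nq_computes_def
    using valid accept_char[OF nm m1 n1] key by blast
qed

theorem theorem5p4: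
  shows "\<exists>C N. \<forall>n\<ge>N. even n \<longrightarrow>
           real (NQC n (HAM n (n div 2))) \<le> C * ln (real n)"
proof (intro exI allI impI)
  fix n :: nat assume n2: "2 \<le> n" and ev: "even n"
  define m where "m = floorlog 2 n"
  have "NQC n (HAM n (n div 2)) \<le> m"
    unfolding NQC_def
    by (rule Least_le) (use nq[OF ev n2] in \<open>auto simp: m_def intro!: exI[of _ "proto (floorlog 2 n) n"]\<close>)
  moreover have "real m \<le> 2 / ln 2 * ln (real n)"
  proof -
    have n0: "real n \<ge> 2" using n2 by simp
    have lg1: "log 2 (real n) \<ge> 1" using n0 by simp
    have "real m = real (nat \<lfloor>log 2 (real n)\<rfloor>) + 1"
      using n2 by (simp add: m_def floorlog_def)
    also have "\<dots> \<le> log 2 (real n) + 1" using lg1 by linarith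
    also have "\<dots> \<le> 2 * log 2 (real n)" using lg1 by simp
    also have "\<dots> = 2 / ln 2 * ln (real n)" by (simp add: log_def)
    finally show ?thesis .
  qed
  ultimately show "real (NQC n (HAM n (n div 2))) \<le> 2 / ln 2 * ln (real n)"
    by (meson of_nat_le_iff order_trans)
qed

end
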